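(* Let $q$ be a prime power and $n$ a positive integer with $\gcd(q,n)=1$; write $v=\nu_2(n)$ and $n=2^vn'$ with $n'$ odd. Let $s\in\mathbb{Z}_n^*$ and $t\in\mathbb{Z}_n$ with $qt\equiv t\pmod n$. Then Type-I duadic splittings of $\mathbb{Z}_n$ given by $\rho_{s,t}$ exist if and only if Type-I duadic splittings of $\mathbb{Z}_{2^v}$ given by $\rho_{s,t}$ (with $s,t$ reduced modulo $2^v$) exist.
   Context: For a modulus $m$ coprime to $q$, with $s$ coprime to $m$ and $qt\equiv t\pmod m$: $\mu_q:\mathbb{Z}_m\to\mathbb{Z}_m$, $i\mapsto qi\bmod m$; $P\subseteq\mathbb{Z}_m$ is $\mu_q$-invariant if $\mu_q(P)=P$; $\rho_{s,t}:\mathbb{Z}_m\to\mathbb{Z}_m$, $i\mapsto s(i+t)\bmod m$. Type-I duadic splittings of $\mathbb{Z}_m$ given by $\rho_{s,t}$ exist if there is a $\mu_q$-invariant $P\subseteq\mathbb{Z}_m$ with $\mathbb{Z}_m=P\cup\rho_{s,t}(P)$ a disjoint union. $\nu_2$ is the $2$-adic valuation. *)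

theory Defs
  imports "HOL-Computational_Algebra.Primes"
begin

text \<open>Z_m is represented by the residues {0..<m} (natural numbers).\<close>

definition mu :: "nat \<Rightarrow> nat \<Rightarrow> nat \<Rightarrow> nat" where
  "mu q m i = (q * i) mod m"

definition mu_invariant :: "nat \<Rightarrow> nat \<Rightarrow> nat set \<Rightarrow> bool" where
  "mu_invariant q m P \<longleftrightarrow> mu q m ` P = P"

definition rho :: "nat \<Rightarrow> nat \<Rightarrow> nat \<Rightarrow> nat \<Rightarrow> nat" where
  "rho s t m i = (s * (i + t)) mod m"

definition typeI_duadic_exists :: "nat \<Rightarrow> nat \<Rightarrow> nat \<Rightarrow> nat \<Rightarrow> bool" where
  "typeI_duadic_exists q m s t \<longleftrightarrow>
     (\<exists>P. P \<subseteq> {..<m} \<and> mu_invariant q m P \<and>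
          {..<m} = P \<union> rho s t m ` P \<and> P \<inter> rho s t m ` P = {})"

definition prime_power :: "nat \<Rightarrow> bool" where
  "prime_power q \<longleftrightarrow> (\<exists>p k. prime p \<and> k \<ge> 1 \<and> q = p ^ k)"

end

theory Submission imports Defs "HOL-Number_Theory.Number_Theory" "HOL-Library.FuncSet"
begin


lemma funpow_in: "f ` A \<subseteq> A \<Longrightarrow> x \<in> A \<Longrightarrow> (f^^n) x \<in> A"
  by (induction n) auto

lemma inj_on_funpow': "f ` A \<subseteq> A \<Longrightarrow> inj_on f A \<Longrightarrow> inj_on (f^^n) A"
proof (induction n)
  case 0 then show ?case by simp
next
  case (Suc n)
  have "(f^^n) ` A \<subseteq> A" using funpow_in[OF Suc.prems(1)] by blast
  then have "inj_on f ((f^^n) ` A)" using Suc.prems(2) inj_on_subset by blast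
  then show ?case using Suc comp_inj_on[of "f^^n" A f] by (simp add: comp_def)
qed

lemma funpow_fix: "(\<And>x. x \<in> A \<Longrightarrow> h x = x) \<Longrightarrow> x \<in> A \<Longrightarrow> (h^^a) x = x"
  by (induction a) auto

lemma perm_order:
  assumes fin: "finite A" and fA: "f ` A \<subseteq> A" and fi: "inj_on f A"
  shows "\<exists>k>0. \<forall>x\<in>A. (f^^k) x = x"
proof -
  define \<phi> where "\<phi> i = restrict (f^^i) A" for i
  have "range \<phi> \<subseteq> Pi\<^sub>E A (\<lambda>_. A)"
    using funpow_in[OF fA] by (auto simp: \<phi>_def)
  moreover have "finite (Pi\<^sub>E A (\<lambda>_. A))" using fin by (simp add: finite_PiE)
  ultimately have "finite (range \<phi>)" by (rule finite_subset)
  then have "\<not> inj \<phi>" using finite_imageD infinite_UNIV_nat by blast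
  then obtain i j where ij: "i \<noteq> j" "\<phi> i = \<phi> j" unfolding inj_def by blast
  then obtain i j where ij: "i < j" "\<phi> i = \<phi> j"
    by (metis linorder_neqE_nat)
  show ?thesis
  proof (intro exI[of _ "j - i"] conjI ballI)
    show "j - i > 0" using ij by simp
    fix x assume x: "x \<in> A"
    have "(f^^i) ((f^^(j-i)) x) = (f^^(i + (j-i))) x"
      by (simp add: funpow_add)
    also have "\<dots> = (f^^j) x" using ij by simp
    also have "\<dots> = \<phi> j x" using x by (simp add: \<phi>_def)
    also have "\<dots> = (f^^i) x" using x ij by (metis \<phi>_def restrict_apply')
    finally have eq: "(f^^i) ((f^^(j-i)) x) = (f^^i) x" .
    show "(f^^(j-i)) x = x"
      using eq inj_on_funpow'[OF fA fi, of i] x funpow_in[OF fA x, of "j-i"]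
      by (meson inj_onD)
  qed
qed

lemma odd_cycle:
  "finite B \<Longrightarrow> odd (card B) \<Longrightarrow> h ` B \<subseteq> B \<Longrightarrow> inj_on h B \<Longrightarrow> \<exists>c\<in>B. \<exists>k. odd k \<and> (h^^k) c = c"
proof (induction "card B" arbitrary: B rule: less_induct)
  case less
  have hB: "h ` B \<subseteq> B" and hi: "inj_on h B" using less.prems by auto
  have "B \<noteq> {}" using less.prems(2) by auto
  then obtain c where c: "c \<in> B" by blast
  obtain j where j: "j > 0" "\<forall>x\<in>B. (h^^j) x = x"
    using perm_order[OF less.prems(1) hB hi] by blast
  define p where "p = (LEAST p. 0 < p \<and> (h^^p) c = c)"
  have p: "0 < p \<and> (h^^p) c = c" unfolding p_def
    by (rule LeastI[of _ j]) (use j c in auto)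
  have pl: "0 < i \<Longrightarrow> i < p \<Longrightarrow> (h^^i) c \<noteq> c" for i
    unfolding p_def using not_less_Least by blast
  show ?case
  proof (cases "odd p")
    case True then show ?thesis using p c by blast
  next
    case False
    define Ob where "Ob = (\<lambda>i. (h^^i) c) ` {..<p}"
    have inj: "inj_on (\<lambda>i. (h^^i) c) {..<p}"
    proof (rule inj_onI)
      have key: "i < i' \<Longrightarrow> i' < p \<Longrightarrow> (h^^i) c = (h^^i') c \<Longrightarrow> False" for i i'
      proof -
        assume a: "i < i'" "i' < p" "(h^^i) c = (h^^i') c"
        have "(h^^i) ((h^^(i'-i)) c) = (h^^(i + (i'-i))) c"
          by (simp add: funpow_add)
        also have "\<dots> = (h^^i') c" using a by simp
        finally have "(h^^i) ((h^^(i'-i)) c) = (h^^i') c" .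
        then have "(h^^i) ((h^^(i'-i)) c) = (h^^i) c" using a by simp
        then have "(h^^(i'-i)) c = c"
          using inj_onD[OF inj_on_funpow'[OF hB hi, of i] _ funpow_in[OF hB c, of "i'-i"] c] by blast
        then show False using pl[of "i'-i"] a by simp
      qed
      fix i i' assume "i \<in> {..<p}" "i' \<in> {..<p}" "(h^^i) c = (h^^i') c"
      then show "i = i'" using key[of i i'] key[of i' i]
        by (cases i i' rule: linorder_cases) auto
    qed
    have cardO: "card Ob = p" unfolding Ob_def using inj by (simp add: card_image)
    have OB: "Ob \<subseteq> B" unfolding Ob_def using funpow_in[OF hB c] by blast
    have cO: "c \<in> Ob" unfolding Ob_def using p by (auto intro: image_eqI[of c _ 0])
    have hBO: "h ` (B - Ob) \<subseteq> B - Ob"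
    proof
      fix y assume "y \<in> h ` (B - Ob)"
      then obtain x where x: "x \<in> B" "x \<notin> Ob" "y = h x" by blast
      have "y \<in> B" using x hB by blast
      moreover have "y \<notin> Ob"
      proof
        assume "y \<in> Ob"
        then obtain i where i0: "i < p" "y = (h^^i) c" unfolding Ob_def by blast
        then have i: "i < p" "h x = (h^^i) c" using x(3) by auto
        show False
        proof (cases i)
          case 0
          have "(h^^(Suc (p-1))) c = c" using p by simp
          then have "h ((h^^(p-1)) c) = c" by simp
          then have "h x = h ((h^^(p-1)) c)" using i 0 by simp
          then have "x = (h^^(p-1)) c"
            using inj_onD[OF hi _ x(1) funpow_in[OF hB c]] by blast
          moreover have "p - 1 < p" using p by simp
          ultimately have "x \<in> Ob" unfolding Ob_def by (intro image_eqI[of x _ "p-1"]) auto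
          then show False using x(2) by blast
        next
          case (Suc i0)
          have "h x = h ((h^^i0) c)" using i Suc by simp
          then have "x = (h^^i0) c"
            using inj_onD[OF hi _ x(1) funpow_in[OF hB c]] by blast
          moreover have "i0 < p" using i Suc by simp
          ultimately have "x \<in> Ob" unfolding Ob_def by (intro image_eqI[of x _ i0]) auto
          then show False using x(2) by blast
        qed
      qed
      ultimately show "y \<in> B - Ob" by blast
    qed
    have cardBO: "card (B - Ob) = card B - p"
      using cardO OB less.prems(1) by (simp add: card_Diff_subset finite_subset)
    have "p \<le> card B" using cardO OB less.prems(1) card_mono by fastforce
    then have "odd (card (B - Ob))" using cardBO False less.prems(2) by auto
    moreover have "card (B - Ob) < card B" using cardBO p \<open>p \<le> card B\<close> by simp
    moreover have "finite (B - Ob)" using less.prems(1) by simp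
    moreover have "inj_on h (B - Ob)" using hi inj_on_subset[of h B "B - Ob"] by blast
    ultimately obtain c' k where "c' \<in> B - Ob" "odd k" "(h^^k) c' = c'"
      using less.hyps[of "B - Ob"] hBO by blast
    then show ?thesis by blast
  qed
qed

lemma funpow_comm:
  assumes "\<And>x. f (g x) = g (f x)"
  shows "(f^^a) ((g^^b) x) = (g^^b) ((f^^a) x)"
proof -
  have 1: "f ((g^^b) y) = (g^^b) (f y)" for y
    by (induction b) (auto simp: assms)
  show ?thesis by (induction a) (auto simp: 1)
qed



lemma splitting_iff:
  fixes f g :: "nat \<Rightarrow> nat" and A :: "nat set"
  assumes fin: "finite A" and ne: "A \<noteq> {}" and fA: "f ` A \<subseteq> A" and gA: "g ` A \<subseteq> A"
    and fi: "inj_on f A" and gi: "inj_on g A" and comm: "\<And>x. f (g x) = g (f x)"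
  shows "(\<exists>P. P \<subseteq> A \<and> f ` P = P \<and> A = P \<union> g ` P \<and> P \<inter> g ` P = {}) \<longleftrightarrow>
         (\<forall>x\<in>A. \<forall>a b. odd b \<longrightarrow> (f^^a) ((g^^b) x) \<noteq> x)"
proof
  assume "\<exists>P. P \<subseteq> A \<and> f ` P = P \<and> A = P \<union> g ` P \<and> P \<inter> g ` P = {}"
  then obtain P where P: "P \<subseteq> A" "f ` P = P" "A = P \<union> g ` P" "P \<inter> g ` P = {}" by blast
  have fstep: "y \<in> A \<Longrightarrow> (f y \<in> P \<longleftrightarrow> y \<in> P)" for y
  proof
    assume y: "y \<in> A" "f y \<in> P"
    then obtain z where "z \<in> P" "f y = f z" using P(2) by (metis imageE)
    then show "y \<in> P" using inj_onD[OF fi _ y(1)] P(1) by blast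
  next
    assume "y \<in> P" then show "f y \<in> P" using P(2) by blast
  qed
  have gstep: "y \<in> A \<Longrightarrow> (g y \<in> P \<longleftrightarrow> y \<notin> P)" for y
  proof
    assume y: "y \<in> A" "g y \<in> P"
    show "y \<notin> P"
    proof
      assume "y \<in> P" then have "g y \<in> g ` P" by blast
      then show False using y P(4) by blast
    qed
  next
    assume y: "y \<in> A" "y \<notin> P"
    show "g y \<in> P"
    proof (rule ccontr)
      assume "g y \<notin> P"
      moreover have "g y \<in> A" using y gA by blast
      ultimately have "g y \<in> g ` P" using P(3) by blast
      then obtain z where "z \<in> P" "g y = g z" by blast
      then show False using inj_onD[OF gi _ y(1)] P(1) y(2) by blast
    qed
  qed
  have fpow: "y \<in> A \<Longrightarrow> ((f^^a) y \<in> P \<longleftrightarrow> y \<in> P)" for y a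
  proof (induction a)
    case 0 then show ?case by simp
  next
    case (Suc a)
    have "(f^^a) y \<in> A" using funpow_in[OF fA Suc.prems] .
    then show ?case using fstep Suc by simp
  qed
  have gpow: "y \<in> A \<Longrightarrow> ((g^^b) y \<in> P \<longleftrightarrow> (y \<in> P \<longleftrightarrow> even b))" for y b
  proof (induction b)
    case 0 then show ?case by simp
  next
    case (Suc b)
    have "(g^^b) y \<in> A" using funpow_in[OF gA Suc.prems] .
    then show ?case using gstep Suc by auto
  qed
  show "\<forall>x\<in>A. \<forall>a b. odd b \<longrightarrow> (f^^a) ((g^^b) x) \<noteq> x"
  proof (intro ballI allI impI notI)
    fix x a b assume x: "x \<in> A" and b: "odd b" and e: "(f^^a) ((g^^b) x) = x"
    have "(g^^b) x \<in> A" using funpow_in[OF gA x] .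
    then have "x \<in> P \<longleftrightarrow> (g^^b) x \<in> P" using fpow[of "(g^^b) x" a] e by simp
    also have "\<dots> \<longleftrightarrow> (x \<in> P \<longleftrightarrow> even b)" using gpow[OF x] .
    finally show False using b by simp
  qed
next
  assume C: "\<forall>x\<in>A. \<forall>a b. odd b \<longrightarrow> (f^^a) ((g^^b) x) \<noteq> x"
  obtain k where k: "k > 0" "\<forall>x\<in>A. (f^^k) x = x" using perm_order[OF fin fA fi] by blast
  obtain l where l: "l > 0" "\<forall>x\<in>A. (g^^l) x = x" using perm_order[OF fin gA gi] by blast
  have le: "even l"
  proof (rule ccontr)
    assume "odd l"
    obtain x where "x \<in> A" using ne by blast
    then show False using C l(2) \<open>odd l\<close> by (metis funpow_0)
  qed
  define G where "G a b x = (f^^a) ((g^^b) x)" for a b x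
  have GA: "x \<in> A \<Longrightarrow> G a b x \<in> A" for a b x
    unfolding G_def using funpow_in[OF fA] funpow_in[OF gA] by blast
  have Gcomp: "G a b (G a' b' x) = G (a+a') (b+b') x" for a b a' b' x
    unfolding G_def by (simp add: funpow_add funpow_comm[of f g, OF comm])
  have Gid: "x \<in> A \<Longrightarrow> G (a*k) (b*l) x = x" for a b x
  proof -
    assume x: "x \<in> A"
    have g: "(g^^(b*l)) x = x"
      using funpow_fix[of A "g^^l" x b] l(2) x by (simp add: funpow_mult mult.commute)
    have "(f^^(a*k)) x = x"
      using funpow_fix[of A "f^^k" x a] k(2) x by (simp add: funpow_mult mult.commute)
    then show ?thesis using g by (simp add: G_def)
  qed
  have Ginv: "x \<in> A \<Longrightarrow> G (a'*(k-1)) (b'*(l-1)) (G a' b' x) = x" for x a' b'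
  proof -
    assume x: "x \<in> A"
    have "a'*(k-1) + a' = a'*k" using k(1) by (cases k) auto
    moreover have "b'*(l-1) + b' = b'*l" using l(1) by (cases l) auto
    ultimately show ?thesis using Gcomp Gid[OF x] by metis
  qed
  have par: "x \<in> A \<Longrightarrow> G a b x = G a' b' x \<Longrightarrow> even (b + b')" for x a b a' b'
  proof (rule ccontr)
    assume x: "x \<in> A" and e: "G a b x = G a' b' x" and o: "odd (b + b')"
    have "G (a'*(k-1)) (b'*(l-1)) (G a b x) = x" using Ginv[OF x] e by simp
    then have "G (a'*(k-1) + a) (b'*(l-1) + b) x = x" using Gcomp by simp
    moreover have "odd (b'*(l-1) + b)" using o le l(1) by auto
    ultimately show False using C x unfolding G_def by blast
  qed
  define R where "R x y \<longleftrightarrow> (\<exists>a b. G a b x = y)" for x y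
  have Rrefl: "R x x" for x unfolding R_def G_def by (rule exI[of _ 0], rule exI[of _ 0]) simp
  have Rtrans: "R x y \<Longrightarrow> R y z \<Longrightarrow> R x z" for x y z
    unfolding R_def using Gcomp by metis
  have Rsym: "x \<in> A \<Longrightarrow> R x y \<Longrightarrow> R y x" for x y
    unfolding R_def using Ginv by metis
  define r where "r x = (LEAST y. y \<in> A \<and> R y x)" for x
  have r1: "x \<in> A \<Longrightarrow> r x \<in> A \<and> R (r x) x" for x
    unfolding r_def by (rule LeastI[of _ x]) (simp add: Rrefl)
  have r2: "x \<in> A \<Longrightarrow> y \<in> A \<Longrightarrow> R x y \<Longrightarrow> r y = r x" for x y
  proof -
    assume x: "x \<in> A" and y: "y \<in> A" and xy: "R x y"
    have "(\<lambda>z. z \<in> A \<and> R z y) = (\<lambda>z. z \<in> A \<and> R z x)"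
      using Rtrans[OF _ xy] Rtrans[OF _ Rsym[OF x xy]] by blast
    then show ?thesis unfolding r_def by simp
  qed
  define P where "P = {x\<in>A. \<exists>a b. even b \<and> G a b (r x) = x}"
  have PA: "P \<subseteq> A" unfolding P_def by blast
  have fP: "f ` P \<subseteq> P"
  proof
    fix y assume "y \<in> f ` P"
    then obtain x a b where x: "x \<in> A" "even b" "G a b (r x) = x" "y = f x"
      unfolding P_def by blast
    have fx: "f x = G 1 0 x" by (simp add: G_def)
    have "f x \<in> A" using fA x by blast
    moreover have "r (f x) = r x" using r2[OF x(1) \<open>f x \<in> A\<close>] fx unfolding R_def by metis
    moreover have "G (1+a) (0+b) (r x) = f x" using Gcomp x(3) fx by metis
    ultimately have "f x \<in> A" "even b" "G (1+a) b (r (f x)) = f x" using x by auto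
    then have "f x \<in> P" unfolding P_def by blast
    then show "y \<in> P" using x(4) by simp
  qed
  have fPe: "f ` P = P"
    using endo_inj_surj[OF finite_subset[OF PA fin] fP inj_on_subset[OF fi PA]] .
  have gP: "g ` P \<subseteq> A - P"
  proof
    fix y assume "y \<in> g ` P"
    then obtain x a b where x: "x \<in> A" "even b" "G a b (r x) = x" "y = g x"
      unfolding P_def by blast
    have gx: "g x = G 0 1 x" by (simp add: G_def)
    have gxA: "g x \<in> A" using gA x by blast
    have rg: "r (g x) = r x" using r2[OF x(1) gxA] gx unfolding R_def by metis
    have e1: "G (0+a) (1+b) (r x) = g x" using Gcomp x(3) gx by metis
    have "g x \<notin> P"
    proof
      assume "g x \<in> P"
      then obtain a' b' where "even b'" "G a' b' (r (g x)) = g x" unfolding P_def by blast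
      then have "G a' b' (r x) = G (0+a) (1+b) (r x)" "even b'" using rg e1 by auto
      then have "even (b' + (1+b))" using par[OF conjunct1[OF r1[OF x(1)]]] by blast
      then show False using x(2) \<open>even b'\<close> by simp
    qed
    then show "y \<in> A - P" using gxA x(4) by blast
  qed
  have co: "A - P \<subseteq> g ` P"
  proof
    fix x assume x: "x \<in> A - P"
    then have xA: "x \<in> A" by blast
    obtain a b where ab: "G a b (r x) = x" using r1[OF xA] unfolding R_def by blast
    have "odd b"
    proof (rule ccontr)
      assume "\<not> odd b"
      then have "x \<in> P" unfolding P_def using xA ab by auto
      then show False using x by blast
    qed
    then obtain b0 where b0: "b = Suc b0" "even b0" by (cases b) auto
    define y where "y = G a b0 (r x)"
    have rxA: "r x \<in> A" using r1[OF xA] by blast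
    have yA: "y \<in> A" unfolding y_def using GA[OF rxA] .
    have "r (r x) = r x" using r2[OF rxA xA] r1[OF xA] by simp
    moreover have "R (r x) y" unfolding R_def y_def by blast
    then have "r y = r (r x)" using r2[OF rxA yA] by simp
    ultimately have ry: "r y = r x" by simp
    have "G a b0 (r y) = y" using ry y_def by simp
    then have "y \<in> P" unfolding P_def using yA b0(2) by blast
    moreover have "g y = x"
    proof -
      have "g y = G 0 1 y" by (simp add: G_def)
      also have "\<dots> = G (0+a) (1+b0) (r x)" unfolding y_def by (rule Gcomp)
      also have "\<dots> = x" using ab b0 by simp
      finally show ?thesis .
    qed
    ultimately show "x \<in> g ` P" by blast
  qed
  have "A = P \<union> g ` P" using PA gP co by blast
  moreover have "P \<inter> g ` P = {}" using gP by blast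
  ultimately show "\<exists>P. P \<subseteq> A \<and> f ` P = P \<and> A = P \<union> g ` P \<and> P \<inter> g ` P = {}"
    using PA fPe by blast
qed



lemma mu_lt: "m > 0 \<Longrightarrow> mu q m x < m" by (simp add: mu_def)
lemma rho_lt: "m > 0 \<Longrightarrow> rho s t m x < m" by (simp add: rho_def)

lemma mu_inj: assumes "coprime q m" shows "inj_on (mu q m) {..<m}"
proof (rule inj_onI)
  fix x y assume x: "x \<in> {..<m}" and y: "y \<in> {..<m}" and e: "mu q m x = mu q m y"
  have "[q*x = q*y] (mod m)" using e by (simp add: mu_def cong_def)
  then have "[x = y] (mod m)" using cong_mult_lcancel_nat[OF assms] by simp
  then show "x = y" using x y by (simp add: cong_def)
qed

lemma rho_inj: assumes "coprime s m" shows "inj_on (rho s t m) {..<m}"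
proof (rule inj_onI)
  fix x y assume x: "x \<in> {..<m}" and y: "y \<in> {..<m}" and e: "rho s t m x = rho s t m y"
  have "[s*(x+t) = s*(y+t)] (mod m)" using e by (simp add: rho_def cong_def)
  then have "[x+t = y+t] (mod m)" using cong_mult_lcancel_nat[OF assms] by simp
  then have "[x = y] (mod m)" by (simp add: cong_add_rcancel_nat)
  then show "x = y" using x y by (simp add: cong_def)
qed

lemma mu_rho_comm:
  assumes "(q*t) mod m = t mod m"
  shows "mu q m (rho s t m x) = rho s t m (mu q m x)"
proof -
  have "mu q m (rho s t m x) = (q * (s * (x + t))) mod m"
    by (simp add: mu_def rho_def mod_mult_right_eq)
  also have "\<dots> = (s*(q*x) + s*(q*t)) mod m" by (simp add: algebra_simps)
  also have "\<dots> = (s*(q*x) + s*t) mod m"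
  proof -
    have "[s*(q*x) + s*(q*t) = s*(q*x) + s*t] (mod m)"
      using assms by (intro cong_add cong_mult cong_refl) (simp add: cong_def)
    then show ?thesis by (simp add: cong_def)
  qed
  also have "\<dots> = rho s t m (mu q m x)"
  proof -
    have "[s*((q*x) mod m + t) = s*(q*x+t)] (mod m)"
      by (intro cong_add cong_mult cong_refl) (simp add: cong_def)
    then show ?thesis by (simp add: cong_def mu_def rho_def algebra_simps)
  qed
  finally show ?thesis .
qed

lemma typeI_iff:
  assumes m: "m > 0" and q: "coprime q m" and s: "coprime s m" and t: "(q*t) mod m = t mod m"
  shows "typeI_duadic_exists q m s t \<longleftrightarrow>
    (\<forall>x\<in>{..<m}. \<forall>a b. odd b \<longrightarrow> (mu q m ^^ a) ((rho s t m ^^ b) x) \<noteq> x)"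
    (is "_ \<longleftrightarrow> ?R")
proof -
  have "typeI_duadic_exists q m s t \<longleftrightarrow>
     (\<exists>P. P \<subseteq> {..<m} \<and> mu q m ` P = P \<and> {..<m} = P \<union> rho s t m ` P \<and> P \<inter> rho s t m ` P = {})"
    by (simp add: typeI_duadic_exists_def mu_invariant_def)
  also have "\<dots> \<longleftrightarrow> ?R"
    by (rule splitting_iff) (use m mu_lt rho_lt mu_inj[OF q] rho_inj[OF s] mu_rho_comm[OF t] in auto)
  finally show ?thesis .
qed

lemma mu_mod: "d dvd m \<Longrightarrow> (mu q m x) mod d = mu q d (x mod d)"
  by (simp add: mu_def mod_mod_cancel mod_mult_right_eq)

lemma rho_mod: assumes "d dvd m" shows "(rho s t m x) mod d = rho s t d (x mod d)"
proof -
  have "[s*(x mod d + t) = s*(x+t)] (mod d)"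
    by (intro cong_add cong_mult cong_refl) (simp add: cong_def)
  then show ?thesis using assms by (simp add: rho_def mod_mod_cancel cong_def)
qed

lemma rho_mod2: "rho (s mod d) (t mod d) d = rho s t d"
proof (rule ext)
  fix y
  have "[(s mod d)*(y + t mod d) = s*(y+t)] (mod d)"
    by (intro cong_add cong_mult cong_refl) (simp_all add: cong_def)
  then show "rho (s mod d) (t mod d) d y = rho s t d y" by (simp add: rho_def cong_def)
qed

lemma funpow_mod:
  assumes "\<And>z. F z mod d = F' (z mod d)"
  shows "(F^^a) z mod d = (F'^^a) (z mod d)"
  by (induction a) (simp_all add: assms)



lemma Hpow:
  assumes comm: "\<And>x. f (g x) = g (f x)"
  shows "((\<lambda>z. (f^^a) ((g^^b) z))^^k) y = (f^^(a*k)) ((g^^(b*k)) y)"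
proof (induction k)
  case 0 then show ?case by simp
next
  case (Suc k)
  have "((\<lambda>z. (f^^a) ((g^^b) z))^^Suc k) y = (f^^a) ((g^^b) ((f^^(a*k)) ((g^^(b*k)) y)))"
    using Suc by simp
  also have "(g^^b) ((f^^(a*k)) ((g^^(b*k)) y)) = (f^^(a*k)) ((g^^b) ((g^^(b*k)) y))"
    using funpow_comm[of f g "a*k" b "(g^^(b*k)) y", OF comm] by simp
  also have "(f^^a) ((f^^(a*k)) ((g^^b) ((g^^(b*k)) y))) = (f^^(a*Suc k)) ((g^^(b*Suc k)) y)"
    by (simp add: funpow_add)
  finally show ?case .
qed

theorem lemma3p9:
  fixes q n s t :: nat
  assumes "prime_power q" and "n > 0" and "coprime q n"
    and "s < n" and "coprime s n" and "t < n"
    and "(q * t) mod n = t mod n"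
  shows "typeI_duadic_exists q n s t \<longleftrightarrow>
         typeI_duadic_exists q (2 ^ multiplicity 2 n) (s mod 2 ^ multiplicity 2 n)
                                 (t mod 2 ^ multiplicity 2 n)"
proof -
  define v where "v = multiplicity 2 n"
  define w where "w = (2::nat) ^ v"
  define m where "m = n div w"
  have wdvd: "w dvd n" unfolding w_def v_def by (rule multiplicity_dvd)
  have w0: "w > 0" unfolding w_def by simp
  have nwm: "n = w * m" unfolding m_def using wdvd by simp
  have m0: "m > 0" using nwm assms(2) by (cases m) auto
  have mdvd: "m dvd n" using nwm by simp
  have oddm: "odd m"
  proof
    assume "even m"
    then have "2 ^ Suc v dvd n" using nwm unfolding w_def by auto
    then have "Suc v \<le> multiplicity 2 n"
      using multiplicity_geI[of n "2::nat" "Suc v"] assms(2) by simp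
    then show False unfolding v_def by simp
  qed
  have cop: "coprime w m" unfolding w_def using oddm by simp
  have qw: "coprime q w" and qm: "coprime q m" using assms(3) nwm by auto
  have sw: "coprime s w" and sm: "coprime s m" using assms(5) nwm by auto
  have tw: "(q*t) mod w = t mod w" using assms(7) mod_mod_cancel[OF wdvd] by metis
  have tm: "(q*t) mod m = t mod m" using assms(7) mod_mod_cancel[OF mdvd] by metis
  have comm_n: "\<And>x. mu q n (rho s t n x) = rho s t n (mu q n x)" using mu_rho_comm[OF assms(7)] .
  have comm_m: "\<And>x. mu q m (rho s t m x) = rho s t m (mu q m x)" using mu_rho_comm[OF tm] .
  have RHS: "typeI_duadic_exists q w (s mod w) (t mod w) = typeI_duadic_exists q w s t"
    unfolding typeI_duadic_exists_def rho_mod2 ..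
  define H where "H a b z = (mu q n ^^ a) ((rho s t n ^^ b) z)" for a b z
  define Fw where "Fw a b z = (mu q w ^^ a) ((rho s t w ^^ b) z)" for a b z
  define Fm where "Fm a b z = (mu q m ^^ a) ((rho s t m ^^ b) z)" for a b z
  have Hw: "H a b z mod w = Fw a b (z mod w)" for a b z
    unfolding H_def Fw_def
    by (simp add: funpow_mod[of "mu q n" w "mu q w"] funpow_mod[of "rho s t n" w "rho s t w"]
        mu_mod[OF wdvd] rho_mod[OF wdvd])
  have Hm: "H a b z mod m = Fm a b (z mod m)" for a b z
    unfolding H_def Fm_def
    by (simp add: funpow_mod[of "mu q n" m "mu q m"] funpow_mod[of "rho s t n" m "rho s t m"]
        mu_mod[OF mdvd] rho_mod[OF mdvd])
  have Cn: "typeI_duadic_exists q n s t \<longleftrightarrow> (\<forall>x\<in>{..<n}. \<forall>a b. odd b \<longrightarrow> H a b x \<noteq> x)"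
    unfolding H_def using typeI_iff[OF assms(2) assms(3) assms(5) assms(7)] .
  have Cw: "typeI_duadic_exists q w s t \<longleftrightarrow> (\<forall>x\<in>{..<w}. \<forall>a b. odd b \<longrightarrow> Fw a b x \<noteq> x)"
    unfolding Fw_def using typeI_iff[OF w0 qw sw tw] .
  have "(\<forall>x\<in>{..<n}. \<forall>a b. odd b \<longrightarrow> H a b x \<noteq> x) \<longleftrightarrow> (\<forall>x\<in>{..<w}. \<forall>a b. odd b \<longrightarrow> Fw a b x \<noteq> x)"
  proof
    assume CN: "\<forall>x\<in>{..<n}. \<forall>a b. odd b \<longrightarrow> H a b x \<noteq> x"
    show "\<forall>x\<in>{..<w}. \<forall>a b. odd b \<longrightarrow> Fw a b x \<noteq> x"
    proof (intro ballI allI impI notI)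
      fix x a b assume x: "x \<in> {..<w}" and b: "odd b" and e: "Fw a b x = x"
      define h where "h = Fm a b"
      have fmA: "mu q m ` {..<m} \<subseteq> {..<m}" and rmA: "rho s t m ` {..<m} \<subseteq> {..<m}"
        using m0 mu_lt rho_lt by auto
      have hA: "h ` {..<m} \<subseteq> {..<m}" unfolding h_def Fm_def
        using funpow_in[OF fmA] funpow_in[OF rmA] by blast
      have "inj_on (rho s t m ^^ b) {..<m}" using inj_on_funpow'[OF rmA rho_inj[OF sm]] .
      moreover have "inj_on (mu q m ^^ a) {..<m}" using inj_on_funpow'[OF fmA mu_inj[OF qm]] .
      ultimately have hi: "inj_on h {..<m}" unfolding h_def Fm_def
        using comp_inj_on[of "rho s t m ^^ b" "{..<m}" "mu q m ^^ a"] funpow_in[OF rmA]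
        by (simp add: comp_def inj_on_subset image_subset_iff)
      obtain c k where c: "c \<in> {..<m}" "odd k" "(h^^k) c = c"
        using odd_cycle[of "{..<m}" h] hA hi oddm by auto
      obtain z where z: "[z = x] (mod w)" "[z = c] (mod m)"
        using binary_chinese_remainder_nat[OF cop] by blast
      define y where "y = z mod n"
      have y: "y < n" unfolding y_def using assms(2) by simp
      have yw: "y mod w = x" unfolding y_def using z(1) x mod_mod_cancel[OF wdvd]
        by (simp add: cong_def)
      have ym: "y mod m = c" unfolding y_def using z(2) c mod_mod_cancel[OF mdvd]
        by (simp add: cong_def)
      have k1: "((H a b)^^k) y mod w = ((Fw a b)^^k) (y mod w)"
        by (rule funpow_mod) (rule Hw)
      have "((Fw a b)^^k) x = x" using funpow_fix[of "{x}" "Fw a b" x k] e by simp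
      then have k1': "((H a b)^^k) y mod w = y mod w" using k1 yw by simp
      have k2: "((H a b)^^k) y mod m = (h^^k) (y mod m)"
        unfolding h_def by (rule funpow_mod) (rule Hm)
      then have k2': "((H a b)^^k) y mod m = y mod m" using ym c by simp
      have c1: "[((H a b)^^k) y = y] (mod w)" using k1' unfolding cong_def .
      have c2: "[((H a b)^^k) y = y] (mod m)" using k2' unfolding cong_def .
      have "[((H a b)^^k) y = y] (mod w * m)" by (rule coprime_cong_mult_nat[OF c1 c2 cop])
      then have eqmod: "((H a b)^^k) y mod n = y mod n" unfolding cong_def nwm[symmetric] .
      have "((H a b)^^k) y = H (a*k) (b*k) y"
        unfolding H_def using Hpow[of "mu q n" "rho s t n", OF comm_n] by (simp add: H_def[abs_def])
      moreover have "H (a*k) (b*k) y < n" unfolding H_def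
        using funpow_in[of "mu q n" "{..<n}"] funpow_in[of "rho s t n" "{..<n}"]
          mu_lt[OF assms(2)] rho_lt[OF assms(2)] y by (simp add: image_subset_iff)
      ultimately have "H (a*k) (b*k) y = y" using eqmod y by simp
      moreover have "odd (b*k)" using b c(2) by simp
      ultimately show False using CN y by blast
    qed
  next
    assume CW: "\<forall>x\<in>{..<w}. \<forall>a b. odd b \<longrightarrow> Fw a b x \<noteq> x"
    show "\<forall>x\<in>{..<n}. \<forall>a b. odd b \<longrightarrow> H a b x \<noteq> x"
    proof (intro ballI allI impI notI)
      fix x a b assume x: "x \<in> {..<n}" and b: "odd b" and e: "H a b x = x"
      have "Fw a b (x mod w) = x mod w" using Hw[of a b x] e by simp
      moreover have "x mod w \<in> {..<w}" using w0 by simp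
      ultimately show False using CW b by blast
    qed
  qed
  then show ?thesis using Cn Cw RHS unfolding w_def v_def by simp
qed

end
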